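(* Let $A$ be an MV-algebra, $d$ a $(\odot,\vee)$-derivation on $A$, and $u\in A$ with $u\le d(1)$. Define $d^u:A\to A$ by $d^u(1)=u$ and $d^u(x)=d(x)$ for $x\ne 1$. Then $d^u$ is a $(\odot,\vee)$-derivation on $A$. In particular, for every $u\in A$ the map $\chi^{(u)}$ defined by $\chi^{(u)}(1)=u$ and $\chi^{(u)}(x)=x$ for $x\neq 1$ is a $(\odot,\vee)$-derivation on $A$.
   Context: An MV-algebra is an algebra $(A,\oplus,{}^*,0)$ of type $(2,1,0)$ satisfying: $x\oplus(y\oplus z)=(x\oplus y)\oplus z$, $x\oplus y=y\oplus x$, $x\oplus 0=x$, $x^{**}=x$, $x\oplus 0^*=0^*$, $(x^*\oplus y)^*\oplus y=(y^*\oplus x)^*\oplus x$. Put $1=0^*$ and $x\odot y=(x^*\oplus y^* )^*$. The natural order is $x\le y$ iff $x^*\oplus y=1$, with lattice operations $x\vee y=(x\odot y^* )\oplus y$, $x\wedge y=x\odot(x^*\oplus y)$. A $(\odot,\vee)$-derivation on $A$ is a map $d:A\to A$ with $d(x\odot y)=(d(x)\odot y)\vee(x\odot d(y))$ for all $x,y\in A$. *)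

theory Defs
  imports Main
begin

definition mv_algebra :: "('a \<Rightarrow> 'a \<Rightarrow> 'a) \<Rightarrow> ('a \<Rightarrow> 'a) \<Rightarrow> 'a \<Rightarrow> bool" where
  "mv_algebra oplus neg zero \<longleftrightarrow>
     (\<forall>x y z. oplus x (oplus y z) = oplus (oplus x y) z) \<and>
     (\<forall>x y. oplus x y = oplus y x) \<and>
     (\<forall>x. oplus x zero = x) \<and>
     (\<forall>x. neg (neg x) = x) \<and>
     (\<forall>x. oplus x (neg zero) = neg zero) \<and>
     (\<forall>x y. oplus (neg (oplus (neg x) y)) y = oplus (neg (oplus (neg y) x)) x)"

definition mv_one :: "('a \<Rightarrow> 'a) \<Rightarrow> 'a \<Rightarrow> 'a" where
  "mv_one neg zero = neg zero"

definition mv_odot :: "('a \<Rightarrow> 'a \<Rightarrow> 'a) \<Rightarrow> ('a \<Rightarrow> 'a) \<Rightarrow> 'a \<Rightarrow> 'a \<Rightarrow> 'a" where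
  "mv_odot oplus neg x y = neg (oplus (neg x) (neg y))"

definition mv_le :: "('a \<Rightarrow> 'a \<Rightarrow> 'a) \<Rightarrow> ('a \<Rightarrow> 'a) \<Rightarrow> 'a \<Rightarrow> 'a \<Rightarrow> 'a \<Rightarrow> bool" where
  "mv_le oplus neg zero x y \<longleftrightarrow> oplus (neg x) y = mv_one neg zero"

definition mv_join :: "('a \<Rightarrow> 'a \<Rightarrow> 'a) \<Rightarrow> ('a \<Rightarrow> 'a) \<Rightarrow> 'a \<Rightarrow> 'a \<Rightarrow> 'a" where
  "mv_join oplus neg x y = oplus (mv_odot oplus neg x (neg y)) y"

definition mv_meet :: "('a \<Rightarrow> 'a \<Rightarrow> 'a) \<Rightarrow> ('a \<Rightarrow> 'a) \<Rightarrow> 'a \<Rightarrow> 'a \<Rightarrow> 'a" where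
  "mv_meet oplus neg x y = mv_odot oplus neg x (oplus (neg x) y)"

definition odot_join_derivation ::
  "('a \<Rightarrow> 'a \<Rightarrow> 'a) \<Rightarrow> ('a \<Rightarrow> 'a) \<Rightarrow> ('a \<Rightarrow> 'a) \<Rightarrow> bool" where
  "odot_join_derivation oplus neg d \<longleftrightarrow>
     (\<forall>x y. d (mv_odot oplus neg x y) =
        mv_join oplus neg (mv_odot oplus neg (d x) y) (mv_odot oplus neg x (d y)))"

end

theory Submission
  imports Defs
begin

locale mvl =
  fixes p :: "'a \<Rightarrow> 'a \<Rightarrow> 'a" (infixl "\<oplus>" 65) and n :: "'a \<Rightarrow> 'a" and z :: 'a
  assumes A: "mv_algebra p n z"
begin

lemma ax: "x \<oplus> (y \<oplus> w) = (x \<oplus> y) \<oplus> w" "x \<oplus> y = y \<oplus> x" "x \<oplus> z = x"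
  "n (n x) = x" "x \<oplus> n z = n z" "n (n x \<oplus> y) \<oplus> y = n (n y \<oplus> x) \<oplus> x"
  using A unfolding mv_algebra_def by blast+

lemma z0: "z \<oplus> x = x" using ax by metis

lemma compl: "n x \<oplus> x = n z"
proof -
  have "n (n x \<oplus> n z) \<oplus> n z = n (n (n z) \<oplus> x) \<oplus> x" by (rule ax(6))
  thus ?thesis using ax z0 by metis
qed

definition le where "le a b \<longleftrightarrow> n a \<oplus> b = n z"

lemma le_add: "le x (x \<oplus> y)"
  unfolding le_def using compl ax by (metis)

lemma le_decomp: "le a b \<Longrightarrow> b = a \<oplus> n (n b \<oplus> a)"
proof -
  assume "le a b"
  hence "n (n a \<oplus> b) \<oplus> b = b" unfolding le_def using ax z0 by metis
  thus ?thesis using ax(6)[of a b] ax(2) by metis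
qed

lemma antisym: "le a b \<Longrightarrow> le b a \<Longrightarrow> a = b"
proof -
  assume "le a b" "le b a"
  hence "n (n a \<oplus> b) \<oplus> b = b" "n (n b \<oplus> a) \<oplus> a = a" unfolding le_def using ax z0 by metis+
  thus ?thesis using ax(6)[of a b] by metis
qed

lemma add_mono: "le a b \<Longrightarrow> le (a \<oplus> c) (b \<oplus> c)"
proof -
  assume "le a b"
  then have "b \<oplus> c = (a \<oplus> c) \<oplus> n (n b \<oplus> a)" using le_decomp ax by metis
  thus ?thesis using le_add by metis
qed

lemma neg_anti: "le a b \<Longrightarrow> le (n b) (n a)"
  unfolding le_def using ax by metis

lemma odot_mono: "le a b \<Longrightarrow> le (mv_odot p n a c) (mv_odot p n b c)"
  unfolding mv_odot_def by (metis neg_anti add_mono)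

lemma odot_one: "x \<noteq> n z \<Longrightarrow> mv_odot p n x y \<noteq> n z"
proof
  assume h: "x \<noteq> n z" "mv_odot p n x y = n z"
  hence "n x \<oplus> n y = z" unfolding mv_odot_def using ax by metis
  hence "le (n x) z" using le_add by metis
  hence "x = n z" unfolding le_def using ax by metis
  thus False using h by simp
qed

lemma one_odot: "mv_odot p n (n z) y = y" "mv_odot p n y (n z) = y"
  unfolding mv_odot_def using ax z0 by metis+

lemma join_idem: "mv_join p n u u = u"
  unfolding mv_join_def mv_odot_def using ax compl z0 by metis

lemma join_le: "le a b \<Longrightarrow> mv_join p n a b = b"
  unfolding mv_join_def mv_odot_def le_def using ax z0 by metis

lemma le_join: "le a (mv_join p n a b)"
proof -
  have "mv_join p n a b = mv_join p n b a"
    unfolding mv_join_def mv_odot_def using ax by metis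
  moreover have "le a (mv_join p n b a)" unfolding mv_join_def using le_add ax(2) by metis
  ultimately show ?thesis by simp
qed

lemma le_trans: "le a b \<Longrightarrow> le b c \<Longrightarrow> le a c"
proof -
  assume h: "le a b" "le b c"
  then have "c = (a \<oplus> n (n b \<oplus> a)) \<oplus> n (n c \<oplus> b)" using le_decomp by metis
  thus ?thesis using le_add ax by metis
qed

lemma le_join2: "le b (mv_join p n a b)"
  unfolding mv_join_def using le_add ax by metis

lemma join_absorb: "le w v \<Longrightarrow> mv_join p n v b = b \<Longrightarrow> mv_join p n w b = b"
proof -
  assume h: "le w v" "mv_join p n v b = b"
  have "le (mv_join p n w b) (mv_join p n v b)"
    unfolding mv_join_def by (rule add_mono, rule odot_mono, rule h(1))
  hence "le (mv_join p n w b) b" using h by simp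
  thus ?thesis using antisym le_join2 by metis
qed

lemma main:
  assumes D: "odot_join_derivation p n d" and U: "le u (d (n z))"
  shows "odot_join_derivation p n (\<lambda>x. if x = n z then u else d x)"
  unfolding odot_join_derivation_def
proof (intro allI)
  fix x y
  have Dxy: "d (mv_odot p n x y) = mv_join p n (mv_odot p n (d x) y) (mv_odot p n x (d y))" for x y
    using D unfolding odot_join_derivation_def by blast
  let ?e = "\<lambda>x. if x = n z then u else d x"
  show "?e (mv_odot p n x y) = mv_join p n (mv_odot p n (?e x) y) (mv_odot p n x (?e y))"
  proof (cases "x = n z")
    case True
    show ?thesis
    proof (cases "y = n z")
      case True
      with \<open>x = n z\<close> show ?thesis using one_odot join_idem by simp
    next
      case False
      have "d y = mv_join p n (mv_odot p n (d (n z)) y) (d y)"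
        using Dxy[of "n z" y] one_odot by simp
      hence "mv_join p n (mv_odot p n u y) (d y) = d y"
        using join_absorb[OF odot_mono[OF U]] by metis
      with True False show ?thesis using one_odot by simp
    qed
  next
    case False
    show ?thesis
    proof (cases "y = n z")
      case True
      have c: "mv_odot p n a b = mv_odot p n b a" for a b unfolding mv_odot_def using ax by metis
      have cj: "mv_join p n a b = mv_join p n b a" for a b
        unfolding mv_join_def mv_odot_def using ax by metis
      have "d x = mv_join p n (mv_odot p n (d (n z)) x) (d x)"
        using Dxy[of x "n z"] one_odot c cj by metis
      hence "mv_join p n (mv_odot p n u x) (d x) = d x"
        using join_absorb[OF odot_mono[OF U]] by metis
      with True False show ?thesis using one_odot c cj by simp
    next
      case False
      with \<open>x \<noteq> n z\<close> show ?thesis using odot_one Dxy by simp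
    qed
  qed
qed

lemma id_der: "odot_join_derivation p n (\<lambda>x. x)"
  unfolding odot_join_derivation_def using join_idem by simp

lemma le_one: "le v (n z)"
  unfolding le_def using ax by metis

end

theorem proposition3p12:
  fixes oplus :: "'a \<Rightarrow> 'a \<Rightarrow> 'a" and neg :: "'a \<Rightarrow> 'a" and zero :: 'a
    and d :: "'a \<Rightarrow> 'a" and u :: 'a
  assumes "mv_algebra oplus neg zero"
    and "odot_join_derivation oplus neg d"
    and "mv_le oplus neg zero u (d (mv_one neg zero))"
  shows "odot_join_derivation oplus neg (\<lambda>x. if x = mv_one neg zero then u else d x) \<and>
         (\<forall>v. odot_join_derivation oplus neg (\<lambda>x. if x = mv_one neg zero then v else x))"
proof -
  interpret mvl oplus neg zero by (rule mvl.intro, rule assms(1))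
  have l: "le u (d (neg zero))" using assms(3) unfolding mv_le_def mv_one_def le_def .
  show ?thesis unfolding mv_one_def
    using main[OF assms(2) l] main[OF id_der le_one] by blast
qed

end
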